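(* Let $T$ be a tree with exactly three pendant vertices $u_1,u_2,u_3$ and major vertex $m$, with $d(u_1,m)\equiv 0$, $d(u_2,m)\equiv 2$ and $d(u_3,m)\equiv 0\pmod 3$. Then there exists an eigenvector $x$ of $L(T)$ with eigenvalue $1$ such that for every $k\in\{1,2,3\}$ and every vertex $v$ on the path $P_{u_k,m}$ with $d(v,u_k)\equiv 1\pmod 3$, one has $x(v)=0$.
   Context: $L(T)=D(T)-A(T)$ is the Laplacian matrix of $T$. A pendant vertex has degree $1$; a major vertex has degree at least $3$. $P_{r,s}$ is the path in $T$ from $r$ to $s$, and $d$ denotes distance. *)

theory Defs
  imports Complex_Main "HOL-Library.FuncSet"
begin

definition simple_graph :: "'a set \<Rightarrow> ('a \<Rightarrow> 'a \<Rightarrow> bool) \<Rightarrow> bool" where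
  "simple_graph V E \<longleftrightarrow> finite V \<and> (\<forall>u v. E u v \<longrightarrow> u \<in> V \<and> v \<in> V)
     \<and> (\<forall>u v. E u v \<longrightarrow> E v u) \<and> (\<forall>v. \<not> E v v)"

definition is_walk :: "('a \<Rightarrow> 'a \<Rightarrow> bool) \<Rightarrow> 'a list \<Rightarrow> bool" where
  "is_walk E p \<longleftrightarrow> p \<noteq> [] \<and> (\<forall>i. Suc i < length p \<longrightarrow> E (p ! i) (p ! Suc i))"

definition walk_between :: "('a \<Rightarrow> 'a \<Rightarrow> bool) \<Rightarrow> 'a \<Rightarrow> 'a \<Rightarrow> 'a list \<Rightarrow> bool" where
  "walk_between E u v p \<longleftrightarrow> is_walk E p \<and> hd p = u \<and> last p = v"

definition path_between :: "('a \<Rightarrow> 'a \<Rightarrow> bool) \<Rightarrow> 'a \<Rightarrow> 'a \<Rightarrow> 'a list \<Rightarrow> bool" where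
  "path_between E u v p \<longleftrightarrow> walk_between E u v p \<and> distinct p"

definition connected_graph :: "'a set \<Rightarrow> ('a \<Rightarrow> 'a \<Rightarrow> bool) \<Rightarrow> bool" where
  "connected_graph V E \<longleftrightarrow> V \<noteq> {} \<and> (\<forall>u\<in>V. \<forall>v\<in>V. \<exists>p. walk_between E u v p)"

definition is_cycle :: "('a \<Rightarrow> 'a \<Rightarrow> bool) \<Rightarrow> 'a list \<Rightarrow> bool" where
  "is_cycle E c \<longleftrightarrow> length c \<ge> 3 \<and> distinct c \<and> is_walk E c \<and> E (last c) (hd c)"

definition acyclic_graph :: "('a \<Rightarrow> 'a \<Rightarrow> bool) \<Rightarrow> bool" where
  "acyclic_graph E \<longleftrightarrow> (\<nexists>c. is_cycle E c)"

definition is_tree :: "'a set \<Rightarrow> ('a \<Rightarrow> 'a \<Rightarrow> bool) \<Rightarrow> bool" where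
  "is_tree V E \<longleftrightarrow> simple_graph V E \<and> connected_graph V E \<and> acyclic_graph E"

definition degree :: "'a set \<Rightarrow> ('a \<Rightarrow> 'a \<Rightarrow> bool) \<Rightarrow> 'a \<Rightarrow> nat" where
  "degree V E v = card {w \<in> V. E v w}"

definition gdist :: "('a \<Rightarrow> 'a \<Rightarrow> bool) \<Rightarrow> 'a \<Rightarrow> 'a \<Rightarrow> nat" where
  "gdist E u v = (LEAST n. \<exists>p. walk_between E u v p \<and> length p = Suc n)"

definition laplacian :: "'a set \<Rightarrow> ('a \<Rightarrow> 'a \<Rightarrow> bool) \<Rightarrow> ('a \<Rightarrow> real) \<Rightarrow> 'a \<Rightarrow> real" where
  "laplacian V E x v = real (degree V E v) * x v - (\<Sum>w\<in>{w \<in> V. E v w}. x w)"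

definition laplacian_eigenvector :: "'a set \<Rightarrow> ('a \<Rightarrow> 'a \<Rightarrow> bool) \<Rightarrow> real \<Rightarrow> ('a \<Rightarrow> real) \<Rightarrow> bool" where
  "laplacian_eigenvector V E lam x \<longleftrightarrow> x \<in> extensional V \<and> (\<exists>v\<in>V. x v \<noteq> 0)
     \<and> (\<forall>v\<in>V. laplacian V E x v = lam * x v)"

end

theory Submission
  imports Defs
begin
fun wk :: "('a \<Rightarrow> 'a \<Rightarrow> bool) \<Rightarrow> 'a list \<Rightarrow> bool" where
  "wk E [] = False"
| "wk E [x] = True"
| "wk E (x # y # r) = (E x y \<and> wk E (y # r))"

lemma is_walk_wk: "is_walk E p = wk E p"
proof (induction p rule: induct_list012)
  case 1 then show ?case by (simp add: is_walk_def)
next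
  case (2 x) then show ?case by (simp add: is_walk_def)
next
  case (3 x y r)
  have "is_walk E (x # y # r) = (E x y \<and> is_walk E (y # r))"
    unfolding is_walk_def
    by (auto simp: nth_Cons split: nat.splits)
  then show ?case using 3 by simp
qed

lemma wk_ne: "wk E p \<Longrightarrow> p \<noteq> []" by (cases p) auto

lemma wk_append: "xs \<noteq> [] \<Longrightarrow> ys \<noteq> [] \<Longrightarrow>
   wk E (xs @ ys) = (wk E xs \<and> wk E ys \<and> E (last xs) (hd ys))"
proof (induction xs rule: induct_list012)
  case 1 then show ?case by simp
next
  case (2 x) then show ?case by (cases ys) auto
next
  case (3 x y zs) then show ?case by auto
qed

lemma wk_overlap: "wk E p \<Longrightarrow> wk E q \<Longrightarrow> last p = hd q \<Longrightarrow> wk E (p @ tl q)"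
proof -
  assume a: "wk E p" "wk E q" "last p = hd q"
  show ?thesis
  proof (cases "tl q = []")
    case True then show ?thesis using a by simp
  next
    case False
    have "q = hd q # tl q" using wk_ne[OF a(2)] by simp
    then have "wk E (tl q)" "E (hd q) (hd (tl q))" using a(2) False
      by (metis list.collapse wk.simps(3))+
    then show ?thesis using a False wk_append wk_ne by metis
  qed
qed

lemma wk_appD1: "wk E (xs @ ys) \<Longrightarrow> xs \<noteq> [] \<Longrightarrow> wk E xs"
  by (cases "ys = []") (auto simp: wk_append)

lemma wk_appD2: "wk E (xs @ ys) \<Longrightarrow> ys \<noteq> [] \<Longrightarrow> wk E ys"
  by (cases "xs = []") (auto simp: wk_append)

lemma wk_take: assumes "wk E p" "j < length p" shows "wk E (take (Suc j) p)"
proof -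
  have "wk E (take (Suc j) p @ drop (Suc j) p)" using assms(1) by simp
  moreover have "take (Suc j) p \<noteq> []" using assms(2) by (cases p) auto
  ultimately show ?thesis using wk_appD1 by blast
qed

lemma wk_drop: assumes "wk E p" "j < length p" shows "wk E (drop j p)"
proof -
  have "wk E (take j p @ drop j p)" using assms(1) by simp
  moreover have "drop j p \<noteq> []" using assms(2) by simp
  ultimately show ?thesis using wk_appD2 by blast
qed

lemma wk_rev: assumes s: "\<And>u v. E u v \<Longrightarrow> E v u" shows "wk E p \<Longrightarrow> wk E (rev p)"
proof (induction p rule: induct_list012)
  case 1 then show ?case by simp
next
  case (2 x) then show ?case by simp
next
  case (3 x y zs)
  have "wk E (rev (y # zs))" using 3 by simp
  moreover have "E y x" using 3(3) s by simp
  ultimately show ?case using wk_append[of "rev (y#zs)" "[x]" E] by (simp add: last_rev)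
qed

lemma wk_shorten: "wk E p \<Longrightarrow> \<exists>q. wk E q \<and> hd q = hd p \<and> last q = last p \<and> distinct q \<and> set q \<subseteq> set p"
proof (induction "length p" arbitrary: p rule: less_induct)
  case less
  show ?case
  proof (cases "distinct p")
    case True then show ?thesis using less.prems by blast
  next
    case False
    then obtain xs ys zs y where p: "p = xs @ [y] @ ys @ [y] @ zs" using not_distinct_decomp by blast
    have w1: "wk E (xs @ [y])" using less.prems p wk_append[of "xs @ [y]" "ys @ [y] @ zs" E] by simp
    have w2: "wk E (y # zs)" using less.prems p wk_append[of "xs @ [y] @ ys" "y # zs" E] by simp
    have w: "wk E (xs @ [y] @ zs)" using wk_overlap[OF w1 w2] by simp
    have "length (xs @ [y] @ zs) < length p" using p by simp
    from less.hyps[OF this w] obtain q where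
      "wk E q" "hd q = hd (xs @ [y] @ zs)" "last q = last (xs @ [y] @ zs)" "distinct q"
      "set q \<subseteq> set (xs @ [y] @ zs)" by blast
    moreover have "hd (xs @ [y] @ zs) = hd p" "last (xs @ [y] @ zs) = last p"
      "set (xs @ [y] @ zs) \<subseteq> set p" using p by (simp_all add: hd_append last_append) auto
    ultimately show ?thesis by (intro exI[of _ q]) auto
  qed
qed

lemma wk_set: "wk E p \<Longrightarrow> (\<And>u v. E u v \<Longrightarrow> u \<in> V \<and> v \<in> V) \<Longrightarrow> hd p \<in> V \<Longrightarrow> set p \<subseteq> V"
proof (induction p rule: induct_list012)
  case (3 x y zs) then show ?case by auto
qed auto

definition ra :: "('a \<Rightarrow> 'a \<Rightarrow> bool) \<Rightarrow> 'a \<Rightarrow> 'a \<Rightarrow> 'a \<Rightarrow> bool" where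
  "ra E c a b = (\<exists>p. wk E p \<and> hd p = a \<and> last p = b \<and> c \<notin> set p)"

locale tr =
  fixes V :: "'a set" and E :: "'a \<Rightarrow> 'a \<Rightarrow> bool"
  assumes tree: "is_tree V E"
begin

abbreviation d where "d \<equiv> gdist E"
abbreviation N where "N v \<equiv> {w \<in> V. E v w}"

lemma fin: "finite V" using tree by (simp add: is_tree_def simple_graph_def)
lemma inV: "E u v \<Longrightarrow> u \<in> V \<and> v \<in> V" using tree by (simp add: is_tree_def simple_graph_def)
lemma sym: "E u v \<Longrightarrow> E v u" using tree by (simp add: is_tree_def simple_graph_def)
lemma irr: "\<not> E v v" using tree by (simp add: is_tree_def simple_graph_def)
lemma acyc: "\<not> is_cycle E c" using tree by (simp add: is_tree_def acyclic_graph_def)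
lemma conn: "u \<in> V \<Longrightarrow> v \<in> V \<Longrightarrow> \<exists>p. wk E p \<and> hd p = u \<and> last p = v"
  using tree by (auto simp: is_tree_def connected_graph_def walk_between_def is_walk_wk)

lemma finN: "finite (N v)" using fin by simp

lemma wkV: "wk E p \<Longrightarrow> hd p \<in> V \<Longrightarrow> set p \<subseteq> V"
  using wk_set[of E p V] inV by blast

lemma wkV2: "wk E p \<Longrightarrow> hd p \<in> V \<Longrightarrow> x \<in> set p \<Longrightarrow> x \<in> V"
  using wkV by blast

lemma hd_last_ov: "p \<noteq> [] \<Longrightarrow> q \<noteq> [] \<Longrightarrow> last p = hd q \<Longrightarrow>
  hd (p @ tl q) = hd p \<and> last (p @ tl q) = last q"
  by (cases q) auto

lemma dist_walk: assumes "u \<in> V" "v \<in> V"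
  shows "\<exists>p. wk E p \<and> hd p = u \<and> last p = v \<and> length p = Suc (d u v)"
proof -
  obtain p where p: "wk E p" "hd p = u" "last p = v" using conn assms by blast
  then have "\<exists>n p. walk_between E u v p \<and> length p = Suc n"
    using wk_ne[OF p(1)]
    by (intro exI[of _ "length p - 1"] exI[of _ p]) (auto simp: walk_between_def is_walk_wk)
  then have "\<exists>p. walk_between E u v p \<and> length p = Suc (d u v)"
    unfolding gdist_def by (rule LeastI_ex)
  then show ?thesis by (auto simp: walk_between_def is_walk_wk)
qed

lemma dist_le: assumes "wk E p" "hd p = u" "last p = v" shows "d u v < length p"
proof -
  have "\<exists>q. walk_between E u v q \<and> length q = Suc (length p - 1)"
    using assms wk_ne[OF assms(1)] by (intro exI[of _ p]) (auto simp: walk_between_def is_walk_wk)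
  then have "d u v \<le> length p - 1" unfolding gdist_def by (rule Least_le)
  then show ?thesis using wk_ne[OF assms(1)] by (cases p) auto
qed

lemma dist_self: "d u u = 0"
  using dist_le[of "[u]" u u] by simp

lemma dist_eq0: assumes "u \<in> V" "v \<in> V" "d u v = 0" shows "u = v"
  using dist_walk[OF assms(1,2)] assms(3) by (auto simp: length_Suc_conv)

lemma dist_le_sym: assumes "u \<in> V" "v \<in> V" shows "d v u \<le> d u v"
proof -
  obtain p where p: "wk E p" "hd p = u" "last p = v" "length p = Suc (d u v)"
    using dist_walk assms by blast
  have "wk E (rev p)" using wk_rev[OF sym p(1)] by blast
  moreover have "hd (rev p) = v" "last (rev p) = u" using p wk_ne[OF p(1)]
    by (auto simp: hd_rev last_rev)
  ultimately have "d v u < length (rev p)" using dist_le by blast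
  then show ?thesis using p by simp
qed

lemma dist_sym: "u \<in> V \<Longrightarrow> v \<in> V \<Longrightarrow> d u v = d v u"
  using dist_le_sym by (simp add: le_antisym)

lemma dist_tri: assumes "u \<in> V" "v \<in> V" "w \<in> V" shows "d u w \<le> d u v + d v w"
proof -
  obtain p where p: "wk E p" "hd p = u" "last p = v" "length p = Suc (d u v)"
    using dist_walk assms by blast
  obtain q where q: "wk E q" "hd q = v" "last q = w" "length q = Suc (d v w)"
    using dist_walk assms by blast
  have "wk E (p @ tl q)" using wk_overlap[OF p(1) q(1)] p q by simp
  moreover have "hd (p @ tl q) = u" "last (p @ tl q) = w" using p q wk_ne[OF p(1)] wk_ne[OF q(1)]
      hd_last_ov[of p q] by auto
  ultimately have "d u w < length (p @ tl q)" using dist_le by blast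
  then show ?thesis using p q by simp
qed

lemma dist_edge: assumes "E u v" shows "d u v = 1"
proof -
  have "d u v < 2" using dist_le[of "[u,v]" u v] assms by simp
  moreover have "d u v \<noteq> 0" using dist_eq0 inV[OF assms] assms irr by blast
  ultimately show ?thesis by simp
qed

lemma ra_sym: "ra E c a b \<Longrightarrow> ra E c b a"
  unfolding ra_def
proof (elim exE conjE)
  fix p assume p: "wk E p" "hd p = a" "last p = b" "c \<notin> set p"
  show "\<exists>p. wk E p \<and> hd p = b \<and> last p = a \<and> c \<notin> set p"
    using p wk_rev[OF sym p(1)] wk_ne[OF p(1)]
    by (intro exI[of _ "rev p"]) (auto simp: hd_rev last_rev)
qed

lemma ra_trans: "ra E c a b \<Longrightarrow> ra E c b z \<Longrightarrow> ra E c a z"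
  unfolding ra_def
proof (elim exE conjE)
  fix p q assume p: "wk E p" "hd p = a" "last p = b" "c \<notin> set p"
    and q: "wk E q" "hd q = b" "last q = z" "c \<notin> set q"
  have "set (tl q) \<subseteq> set q" by (cases q) auto
  then show "\<exists>p. wk E p \<and> hd p = a \<and> last p = z \<and> c \<notin> set p"
    using p q wk_overlap[OF p(1) q(1)] wk_ne[OF p(1)] wk_ne[OF q(1)]
      hd_last_ov[of p q] by (intro exI[of _ "p @ tl q"]) auto
qed

lemma ra_edge: "E a b \<Longrightarrow> a \<noteq> c \<Longrightarrow> b \<noteq> c \<Longrightarrow> ra E c a b"
  unfolding ra_def by (intro exI[of _ "[a,b]"]) auto

lemma ra_refl: "a \<noteq> c \<Longrightarrow> ra E c a a"
  unfolding ra_def by (intro exI[of _ "[a]"]) auto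

lemma ra_notc: "ra E c a b \<Longrightarrow> b \<noteq> c"
  unfolding ra_def by (metis last_in_set wk_ne)

lemma ra_notc1: "ra E c a b \<Longrightarrow> a \<noteq> c"
  unfolding ra_def by (metis hd_in_set wk_ne)

lemma ra_prefix: assumes "wk E p" "hd p = a" "c \<notin> set p" "z \<in> set p" shows "ra E c a z"
proof -
  obtain j where j: "j < length p" "p ! j = z" using assms(4) by (metis in_set_conv_nth)
  have "wk E (take (Suc j) p)" using wk_take assms j by blast
  moreover have "hd (take (Suc j) p) = a" using assms(2) wk_ne[OF assms(1)] by (cases p) auto
  moreover have "last (take (Suc j) p) = z" using j by (simp add: take_Suc_conv_app_nth)
  moreover have "c \<notin> set (take (Suc j) p)" using assms(3) by (meson in_set_takeD)
  ultimately show ?thesis unfolding ra_def by blast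
qed

lemma sep: assumes "E v a" "E v b" "ra E v a b" shows "a = b"
proof (rule ccontr)
  assume ne: "a \<noteq> b"
  obtain p where p: "wk E p" "hd p = a" "last p = b" "v \<notin> set p" using assms(3) ra_def by metis
  obtain q where q: "wk E q" "hd q = a" "last q = b" "distinct q" "set q \<subseteq> set p"
    using wk_shorten[OF p(1)] p by metis
  have vq: "v \<notin> set q" using q p by blast
  have "length q \<noteq> 1" using q ne by (cases q) auto
  moreover have "length q \<noteq> 0" using wk_ne[OF q(1)] by simp
  ultimately have lq: "length q \<ge> 2" by arith
  have "wk E (v # q)" using q assms(1) wk_ne[OF q(1)] by (cases q) auto
  then have "is_cycle E (v # q)" unfolding is_cycle_def
    using lq vq q sym[OF assms(2)] wk_ne[OF q(1)] by (auto simp: is_walk_wk)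
  then show False using acyc by blast
qed

lemma short_avoid: assumes "E v w" "b \<in> V" "d w b \<le> d v b" shows "ra E v w b"
proof -
  have V: "v \<in> V" "w \<in> V" using inV assms by auto
  obtain p where p: "wk E p" "hd p = w" "last p = b" "length p = Suc (d w b)"
    using dist_walk V assms by blast
  have "v \<notin> set p"
  proof
    assume "v \<in> set p"
    then obtain j where j: "j < length p" "p ! j = v" by (metis in_set_conv_nth)
    have j0: "j \<noteq> 0" using j p wk_ne[OF p(1)] irr assms(1) by (metis hd_conv_nth)
    have "wk E (drop j p)" using wk_drop p j by blast
    moreover have "hd (drop j p) = v" using j by (simp add: hd_drop_conv_nth)
    moreover have "last (drop j p) = b" using j p by simp
    ultimately have "d v b < length (drop j p)" using dist_le by blast
    then show False using j0 p assms(3) by simp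
  qed
  then show ?thesis using p unfolding ra_def by blast
qed

lemma down_unique: assumes "E v w" "E v w'" "b \<in> V" "d w b \<le> d v b" "d w' b \<le> d v b"
  shows "w = w'"
proof -
  have r1: "ra E v w b" using short_avoid assms(1,3,4) by blast
  have r2: "ra E v w' b" using short_avoid assms(2,3,5) by blast
  have "ra E v w w'" using ra_trans[OF r1 ra_sym[OF r2]] .
  then show ?thesis using sep assms by blast
qed

lemma down_exists: assumes "v \<in> V" "b \<in> V" "v \<noteq> b" shows "\<exists>w. E v w \<and> d w b + 1 = d v b"
proof -
  obtain p where p: "wk E p" "hd p = v" "last p = b" "length p = Suc (d v b)"
    using dist_walk assms by blast
  have "d v b \<noteq> 0" using dist_eq0 assms by blast
  then obtain y r where pr: "p = v # y # r" using p by (cases p; cases "tl p") auto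
  have e: "E v y" using p pr by simp
  have "d y b < length (y # r)" using dist_le[of "y # r" y b] p pr by simp
  then have "d y b + 1 \<le> d v b" using p pr by simp
  moreover have "d v b \<le> d v y + d y b" using dist_tri inV e assms by blast
  ultimately show ?thesis using dist_edge[OF e] e by (intro exI[of _ y]) simp
qed

lemma nb_cases: assumes "E v w" "b \<in> V"
  shows "d w b = d v b + 1 \<or> d w b + 1 = d v b"
proof -
  have V: "v \<in> V" "w \<in> V" using inV assms by auto
  have t1: "d w b \<le> d v b + 1" using dist_tri[of w v b] dist_edge[OF sym[OF assms(1)]] assms V by simp
  have t2: "d v b \<le> d w b + 1" using dist_tri[of v w b] dist_edge[OF assms(1)] assms V by simp
  show ?thesis
  proof (cases "d w b \<le> d v b")
    case True
    have "v \<noteq> b" using True dist_self dist_eq0 V assms irr by (metis le_zero_eq)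
    then obtain w0 where w0: "E v w0" "d w0 b + 1 = d v b" using down_exists V assms by blast
    have "w = w0" using down_unique[of v w w0 b] True w0 assms by simp
    then show ?thesis using w0 by simp
  next
    case False then show ?thesis using t1 by simp
  qed
qed

lemma leaf_exists: assumes "E v w" shows "\<exists>l. l \<in> V \<and> degree V E l = 1 \<and> ra E v w l"
proof -
  have V: "v \<in> V" "w \<in> V" using inV assms by auto
  define R where "R = {z \<in> V. ra E v w z}"
  have "v \<noteq> w" using assms irr by blast
  then have "w \<in> R" using R_def V ra_refl[of w v] by simp
  have finR: "finite R" using fin R_def by simp
  have "Max ((\<lambda>z. d z v) ` R) \<in> (\<lambda>z. d z v) ` R"
    using Max_in[of "(\<lambda>z. d z v) ` R"] finR \<open>w \<in> R\<close> by blast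
  then obtain l where l: "l \<in> R" "d l v = Max ((\<lambda>z. d z v) ` R)"
    by (metis (no_types, lifting) imageE)
  have lmax: "\<And>z. z \<in> R \<Longrightarrow> d z v \<le> d l v" using l finR by simp
  have lV: "l \<in> V" and lnv: "l \<noteq> v" using l R_def ra_notc by auto
  obtain l0 where l0: "E l l0" "d l0 v + 1 = d l v" using down_exists lV V lnv by blast
  have "N l = {l0}"
  proof (intro equalityI subsetI)
    fix z assume z: "z \<in> N l"
    then have ez: "E l z" by simp
    show "z \<in> {l0}"
    proof (cases "d z v + 1 = d l v")
      case True then show ?thesis using down_unique[of l z l0 v] ez l0 V by simp
    next
      case False
      then have dz: "d z v = d l v + 1" using nb_cases[OF ez V(1)] by simp
      then have "z \<noteq> v" using dist_self by force
      have "ra E v w l" using l R_def by simp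
      then have "ra E v w z" using ra_trans[OF _ ra_edge[OF ez lnv \<open>z \<noteq> v\<close>]] by blast
      then have "z \<in> R" using R_def inV ez by blast
      then show ?thesis using lmax dz by fastforce
    qed
  next
    fix z assume "z \<in> {l0}" then show "z \<in> N l" using l0 inV by auto
  qed
  then show ?thesis using lV l R_def by (intro exI[of _ l]) (simp add: degree_def)
qed

end

locale sp = tr V E for V :: "'a set" and E +
  fixes u1 u2 u3 m :: 'a
  assumes dst: "distinct [u1, u2, u3]"
    and leaves: "{v \<in> V. degree V E v = 1} = {u1, u2, u3}"
    and mV: "m \<in> V" and mdeg: "degree V E m \<ge> 3"
    and a1: "gdist E u1 m mod 3 = 0"
    and a2: "gdist E u2 m mod 3 = 2"
    and a3: "gdist E u3 m mod 3 = 0"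
begin

definition lf where "lf c y = (SOME l. l \<in> V \<and> degree V E l = 1 \<and> ra E c y l)"

lemma uV: "u1 \<in> V" "u2 \<in> V" "u3 \<in> V" "degree V E u1 = 1" "degree V E u2 = 1" "degree V E u3 = 1"
  using leaves by blast+

lemma leaf_iff: "v \<in> V \<Longrightarrow> degree V E v = 1 \<Longrightarrow> v \<in> {u1, u2, u3}"
  using leaves by blast

lemma card_leaves: "card {u1, u2, u3} = 3" using dst by simp

lemma lf_prop: "E c y \<Longrightarrow> lf c y \<in> V \<and> degree V E (lf c y) = 1 \<and> ra E c y (lf c y)"
  unfolding lf_def using leaf_exists[of c y] by (rule someI_ex)

lemma lf_inj: "inj_on (lf c) (N c)"
proof (rule inj_onI)
  fix y y' assume y: "y \<in> N c" "y' \<in> N c" and eq: "lf c y = lf c y'"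
  have r1: "ra E c y (lf c y)" and r2: "ra E c y' (lf c y')" using lf_prop y by auto
  have "ra E c y y'" using ra_trans[OF r1 ra_sym[OF r2[folded eq]]] .
  then show "y = y'" using sep y by auto
qed

lemma lf_img: "lf c ` N c \<subseteq> {u1, u2, u3}"
  using lf_prop leaf_iff by auto

lemma deg_le3: "card (N c) \<le> 3"
  using card_inj_on_le[OF lf_inj lf_img] card_leaves by simp

lemma degm: "card (N m) = 3" using deg_le3[of m] mdeg by (simp add: degree_def)

lemma img_m: "lf m ` N m = {u1, u2, u3}"
proof (rule card_subset_eq)
  show "card (lf m ` N m) = card {u1, u2, u3}" using card_image[OF lf_inj] degm card_leaves by simp
qed (use lf_img in auto)

lemma one_leaf: assumes "E m y" "l \<in> V" "degree V E l = 1" "ra E m y l" shows "l = lf m y"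
proof -
  have "l \<in> lf m ` N m" using img_m leaf_iff assms by blast
  then obtain y1 where y1: "y1 \<in> N m" "l = lf m y1" by blast
  have "ra E m y1 l" using lf_prop y1 by auto
  then have "ra E m y y1" using ra_trans[OF assms(4) ra_sym] by blast
  then have "y = y1" using sep assms(1) y1 by auto
  then show ?thesis using y1 by simp
qed

lemma two_elems: "finite S \<Longrightarrow> card S \<ge> 2 \<Longrightarrow> \<exists>a b. a \<in> S \<and> b \<in> S \<and> a \<noteq> b"
proof -
  assume f: "finite S" and c: "card S \<ge> 2"
  then obtain a where a: "a \<in> S" by fastforce
  then have "card (S - {a}) \<ge> 1" using c f by simp
  then have "S - {a} \<noteq> {}" by (metis card.empty not_one_le_zero)
  then obtain b where "b \<in> S - {a}" by blast
  then show ?thesis using a by blast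
qed

lemma deg_le2: assumes vV: "v \<in> V" and vm: "v \<noteq> m" shows "card (N v) \<le> 2"
proof (rule ccontr)
  assume "\<not> card (N v) \<le> 2"
  then have c3: "card (N v) \<ge> 3" by simp
  obtain w0 where w0: "E v w0" "d w0 m + 1 = d v m" using down_exists[OF vV mV vm] by blast
  have "w0 \<in> N v" using w0 inV by simp
  then have "card (N v - {w0}) \<ge> 2" using c3 finN[of v] by (simp add: card_Diff_singleton)
  then obtain w1 w2 where w12: "w1 \<in> N v - {w0}" "w2 \<in> N v - {w0}" "w1 \<noteq> w2"
    using two_elems[of "N v - {w0}"] finN by blast
  have "m \<noteq> v" using vm by simp
  then obtain y where y: "E m y" "d y v + 1 = d m v" using down_exists[OF mV vV] by blast
  have rmy: "ra E m y v" using short_avoid[of m y v] y vV by simp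
  have rw0: "ra E v w0 m" using short_avoid[of v w0 m] w0 mV by simp
  have key: "ra E m y (lf v w)" if w: "w \<in> N v - {w0}" for w
  proof -
    have ew: "E v w" using w by simp
    obtain q where q: "wk E q" "hd q = w" "last q = lf v w" "v \<notin> set q"
      using lf_prop[OF ew] unfolding ra_def by blast
    have "m \<notin> set q"
    proof
      assume "m \<in> set q"
      then have "ra E v w m" using ra_prefix[OF q(1) q(2) q(4)] by blast
      then have "ra E v w w0" using ra_trans[OF _ ra_sym[OF rw0]] by blast
      then show False using sep[OF ew w0(1)] w by blast
    qed
    then have r1: "ra E m w (lf v w)" unfolding ra_def using q by blast
    have "w \<noteq> m" using ra_notc1[OF r1] .
    then have "ra E m v w" using ra_edge[OF ew vm] by blast
    then show ?thesis using ra_trans[OF rmy ra_trans[OF _ r1]] by blast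
  qed
  have e1: "E v w1" "E v w2" using w12 by auto
  have "lf v w1 = lf m y" using one_leaf[OF y(1) _ _ key[OF w12(1)]] lf_prop[OF e1(1)] by blast
  moreover have "lf v w2 = lf m y" using one_leaf[OF y(1) _ _ key[OF w12(2)]] lf_prop[OF e1(2)] by blast
  ultimately have "lf v w1 = lf v w2" by simp
  then have "w1 = w2" using inj_onD[OF lf_inj[of v]] w12 by blast
  then show False using w12 by simp
qed

end

context sp
begin

definition L2 where "L2 v \<longleftrightarrow> d v u2 + d v m = d u2 m"

lemma dsym: "u \<in> V \<Longrightarrow> v \<in> V \<Longrightarrow> d u v = d v u" by (rule dist_sym)

lemma P1: assumes e: "E v w" and dw: "d w m = d v m + 1" and Lw: "L2 w" shows "L2 v"
proof -
  have V: "v \<in> V" "w \<in> V" using inV[OF e] by auto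
  have c: "d v u2 = d w u2 + 1 \<or> d v u2 + 1 = d w u2" using nb_cases[OF sym[OF e] uV(2)] .
  have t: "d u2 m \<le> d u2 v + d v m" using dist_tri[OF uV(2) V(1) mV] .
  have "d u2 v = d v u2" using dsym[OF uV(2) V(1)] .
  then show ?thesis using c t dw Lw unfolding L2_def by auto
qed

lemma ch_exists: assumes vV: "v \<in> V" and vm: "v \<noteq> m" and Lv: "L2 v" and vu: "v \<noteq> u2"
  shows "\<exists>wu. E v wu \<and> d wu m = d v m + 1 \<and> L2 wu \<and> d wu u2 + 1 = d v u2"
proof -
  obtain w0 where w0: "E v w0" "d w0 m + 1 = d v m" using down_exists[OF vV mV vm] by blast
  have L0: "L2 w0" using P1[OF sym[OF w0(1)]] w0(2) Lv by simp
  have dw0: "d w0 u2 = d v u2 + 1" using L0 Lv w0(2) unfolding L2_def by simp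
  obtain wu where wu: "E v wu" "d wu u2 + 1 = d v u2" using down_exists[OF vV uV(2) vu] by blast
  have "d wu m = d v m + 1"
  proof -
    have "d wu m = d v m + 1 \<or> d wu m + 1 = d v m" using nb_cases[OF wu(1) mV] .
    moreover have "d wu m + 1 \<noteq> d v m"
    proof
      assume "d wu m + 1 = d v m"
      then have "wu = w0" using down_unique[OF wu(1) w0(1) mV] w0(2) by simp
      then show False using dw0 wu(2) by simp
    qed
    ultimately show ?thesis by blast
  qed
  moreover have "L2 wu" using calculation wu(2) Lv unfolding L2_def by simp
  ultimately show ?thesis using wu by blast
qed

lemma card_ge2: "a \<in> N v \<Longrightarrow> b \<in> N v \<Longrightarrow> a \<noteq> b \<Longrightarrow> card (N v) \<ge> 2"
proof -
  assume "a \<in> N v" "b \<in> N v" "a \<noteq> b"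
  then have "{a, b} \<subseteq> N v" by blast
  then have "card {a, b} \<le> card (N v)" using card_mono[OF finN] by blast
  then show ?thesis using \<open>a \<noteq> b\<close> by simp
qed

lemma card_ge3: "a \<in> N v \<Longrightarrow> b \<in> N v \<Longrightarrow> c \<in> N v \<Longrightarrow> a \<noteq> b \<Longrightarrow> a \<noteq> c \<Longrightarrow> b \<noteq> c \<Longrightarrow> card (N v) \<ge> 3"
proof -
  assume "a \<in> N v" "b \<in> N v" "c \<in> N v" "a \<noteq> b" "a \<noteq> c" "b \<noteq> c"
  then have "{a, b, c} \<subseteq> N v" by blast
  then have "card {a, b, c} \<le> card (N v)" using card_mono[OF finN] by blast
  then show ?thesis using \<open>a \<noteq> b\<close> \<open>a \<noteq> c\<close> \<open>b \<noteq> c\<close> by simp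
qed

lemma L2_deg: assumes vV: "v \<in> V" and vm: "v \<noteq> m" and Lv: "L2 v" and vu: "v \<noteq> u2"
  shows "card (N v) \<ge> 2"
proof -
  obtain w0 where w0: "E v w0" "d w0 m + 1 = d v m" using down_exists[OF vV mV vm] by blast
  obtain wu where wu: "E v wu" "d wu m = d v m + 1" using ch_exists[OF assms] by blast
  have "w0 \<noteq> wu" using w0 wu by auto
  then show ?thesis using card_ge2[of w0 v wu] w0 wu inV by blast
qed

lemma P2: assumes vV: "v \<in> V" and vm: "v \<noteq> m" and Lv: "L2 v" and e: "E v w"
  and dw: "d w m = d v m + 1" shows "L2 w"
proof -
  obtain w0 where w0: "E v w0" "d w0 m + 1 = d v m" using down_exists[OF vV mV vm] by blast
  have wV: "w \<in> V" "w0 \<in> V" using inV e w0 by auto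
  have "w0 \<noteq> w" using w0 dw by auto
  have vu: "v \<noteq> u2"
  proof
    assume "v = u2"
    then have "card (N v) = 1" using uV by (simp add: degree_def)
    moreover have "card (N v) \<ge> 2" using card_ge2[of w0 v w] w0 e wV \<open>w0 \<noteq> w\<close> by blast
    ultimately show False by simp
  qed
  obtain wu where wu: "E v wu" "d wu m = d v m + 1" "L2 wu" using ch_exists[OF vV vm Lv vu] by blast
  have wuV: "wu \<in> V" using inV wu by blast
  show ?thesis
  proof (rule ccontr)
    assume "\<not> L2 w"
    then have "w \<noteq> wu" using wu by blast
    moreover have "w0 \<noteq> wu" using w0 wu by auto
    ultimately have "card (N v) \<ge> 3" using card_ge3[of w0 v wu w] w0 wu e wV wuV \<open>w0 \<noteq> w\<close> by auto
    then show False using deg_le2[OF vV vm] by simp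
  qed
qed

lemma Lm: "L2 m" unfolding L2_def using dsym[OF mV uV(2)] dist_self by simp

lemma Lu2: "L2 u2" unfolding L2_def using dist_self by simp

lemma u_ne_m: "u1 \<noteq> m" "u2 \<noteq> m" "u3 \<noteq> m" using uV mdeg by auto

lemma notL1: "\<not> L2 u1" using L2_deg[OF uV(1) u_ne_m(1)] dst uV(4) by (auto simp: degree_def)
lemma notL3: "\<not> L2 u3" using L2_deg[OF uV(3) u_ne_m(3)] dst uV(6) by (auto simp: degree_def)

end

definition gg :: "nat \<Rightarrow> real" where
  "gg n = (if n mod 6 \<in> {0,1} then 1 else if n mod 6 \<in> {3,4} then -1 else 0)"
definition hh :: "nat \<Rightarrow> real" where
  "hh n = (if n mod 6 \<in> {0,5} then 1 else if n mod 6 \<in> {2,3} then -1 else 0)"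

lemma mod6_cases: "(n::nat) mod 6 = 0 \<or> n mod 6 = 1 \<or> n mod 6 = 2 \<or> n mod 6 = 3 \<or> n mod 6 = 4 \<or> n mod 6 = 5"
  by arith

lemma gg_rec: "gg (Suc (Suc n)) = gg (Suc n) - gg n"
  using mod6_cases[of n] unfolding gg_def by (auto simp: mod_Suc)

lemma hh_rec: "hh (Suc (Suc n)) = hh (Suc n) - hh n"
  using mod6_cases[of n] unfolding hh_def by (auto simp: mod_Suc)

lemma gg0: "gg 0 = 1" "hh 0 = 1" "gg 1 = 1" "hh 1 = 0" by (auto simp: gg_def hh_def)

lemma gg_z: "n mod 3 = 2 \<Longrightarrow> gg n = 0"
  using mod6_cases[of n] unfolding gg_def by auto presburger+

lemma hh_z: "n mod 3 = 1 \<Longrightarrow> hh n = 0"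
  using mod6_cases[of n] unfolding hh_def by auto presburger+

lemma m3a: "(r::nat) mod 3 = 0 \<Longrightarrow> r \<ge> 1 \<Longrightarrow> (r - 1) mod 3 = 2"
  by (cases r) (auto simp: mod_Suc split: if_splits)
lemma m3b: "(r::nat) mod 3 = 2 \<Longrightarrow> (r - 1) mod 3 = 1"
  by (cases r) (auto simp: mod_Suc split: if_splits)

context sp
begin

definition xv where "xv v = (if v \<in> V then (if L2 v then hh (d v m) else gg (d v m)) else undefined)"

lemma xm: "xv m = 1" using Lm mV dist_self gg0 by (simp add: xv_def)

lemma eig_m: "laplacian V E xv m = xv m"
proof -
  obtain wu where wu: "E m wu" "d wu u2 + 1 = d m u2" using down_exists[OF mV uV(2)] u_ne_m(2) by metis
  have wuN: "wu \<in> N m" using wu inV by blast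
  have vals: "xv w = (if w = wu then 0 else 1)" if w: "w \<in> N m" for w
  proof -
    have ew: "E m w" and wV: "w \<in> V" using w by auto
    have dm: "d w m = 1" using dist_edge[OF sym[OF ew]] .
    have "L2 w \<longleftrightarrow> w = wu"
    proof
      assume "L2 w"
      then have "d w u2 + 1 = d m u2" using dm dsym[OF mV uV(2)] unfolding L2_def by simp
      then show "w = wu" using down_unique[OF ew wu(1) uV(2)] wu(2) by simp
    next
      assume "w = wu"
      then show "L2 w" using dm wu(2) dsym[OF mV uV(2)] unfolding L2_def by simp
    qed
    then show ?thesis using dm wV gg0 by (auto simp: xv_def)
  qed
  have "sum xv (N m) = xv wu + sum xv (N m - {wu})"
    using sum.remove[OF finN wuN] by simp
  also have "\<dots> = 0 + sum (\<lambda>w. 1) (N m - {wu})"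
    using vals wuN by (intro arg_cong2[where f="(+)"] sum.cong) auto
  also have "\<dots> = 2" using degm wuN finN by (simp add: card_Diff_singleton)
  finally have "sum xv (N m) = 2" .
  then show ?thesis using xm degm by (simp add: laplacian_def degree_def)
qed

lemma eig_v: assumes vV: "v \<in> V" and vm: "v \<noteq> m" shows "laplacian V E xv v = xv v"
proof -
  define \<phi> where "\<phi> = (if L2 v then hh else gg)"
  define r where "r = d v m"
  obtain w0 where w0: "E v w0" "d w0 m + 1 = d v m" using down_exists[OF vV mV vm] by blast
  have w0V: "w0 \<in> V" using inV w0 by blast
  have r1: "r \<ge> 1" using w0 r_def by simp
  define C where "C = N v - {w0}"
  have w0N: "w0 \<in> N v" using w0 w0V by simp
  have cpos: "card (N v) > 0" using finN w0N card_gt_0_iff by blast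
  have NC: "card (N v) = card C + 1" using C_def card_Diff_singleton[OF w0N] cpos by simp
  have Cle: "card C \<le> 1" using NC deg_le2[OF vV vm] by simp
  have xvv: "xv v = \<phi> r" using vV by (simp add: xv_def \<phi>_def r_def)
  have xC: "xv c = \<phi> (r + 1)" if c: "c \<in> C" for c
  proof -
    have ec: "E v c" and cV: "c \<in> V" and cw: "c \<noteq> w0" using c C_def by auto
    have "d c m = d v m + 1 \<or> d c m + 1 = d v m" using nb_cases[OF ec mV] .
    moreover have "d c m + 1 \<noteq> d v m" using down_unique[OF ec w0(1) mV] w0(2) cw by auto
    ultimately have dc: "d c m = d v m + 1" by blast
    have "L2 c \<longleftrightarrow> L2 v" using P1[OF ec dc] P2[OF vV vm _ ec dc] by blast
    then show ?thesis using cV dc by (simp add: xv_def \<phi>_def r_def)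
  qed
  have xw0: "xv w0 = \<phi> (r - 1)"
  proof (cases "w0 = m")
    case True
    then have "r = 1" using w0 r_def dist_self by simp
    then show ?thesis using True xm gg0 by (simp add: \<phi>_def)
  next
    case False
    have dv: "d v m = d w0 m + 1" using w0(2) by simp
    have LL: "L2 w0 = L2 v" using P1[OF sym[OF w0(1)] dv] P2[OF w0V False _ sym[OF w0(1)] dv] by blast
    have dr: "d w0 m = r - 1" using w0(2) r_def by simp
    have "xv w0 = (if L2 w0 then hh (d w0 m) else gg (d w0 m))" using w0V by (simp add: xv_def)
    then show ?thesis unfolding LL dr \<phi>_def by simp
  qed
  have "sum xv (N v) = xv w0 + sum xv C"
    using sum.remove[OF finN w0N] C_def by simp
  also have "\<dots> = \<phi> (r - 1) + real (card C) * \<phi> (r + 1)"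
    using xC xw0 by simp
  finally have S: "sum xv (N v) = \<phi> (r - 1) + real (card C) * \<phi> (r + 1)" .
  show ?thesis
  proof (cases "card C = 1")
    case True
    have rec: "\<phi> (Suc (Suc (r - 1))) = \<phi> (Suc (r - 1)) - \<phi> (r - 1)"
      using gg_rec hh_rec by (simp add: \<phi>_def)
    have "Suc (Suc (r - 1)) = r + 1" "Suc (r - 1) = r" using r1 by auto
    then have "\<phi> (r + 1) = \<phi> r - \<phi> (r - 1)" using rec by simp
    then show ?thesis using S NC True xvv by (simp add: laplacian_def degree_def algebra_simps)
  next
    case False
    from False Cle have C0: "card C = 0" by linarith
    have "degree V E v = 1" unfolding degree_def using NC C0 by linarith
    then have vl: "v \<in> {u1, u2, u3}" using leaf_iff[OF vV] by blast
    have z: "\<phi> (r - 1) = 0"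
    proof -
      consider "v = u1" | "v = u2" | "v = u3" using vl by blast
      then show ?thesis
      proof cases
        case 1
        then have "\<phi> = gg" using notL1 by (simp add: \<phi>_def)
        moreover have "r = d u1 m" using 1 r_def by simp
        then have "(r - 1) mod 3 = 2" using a1 r1 m3a by simp
        ultimately show ?thesis using gg_z by simp
      next
        case 2
        then have "\<phi> = hh" using Lu2 by (simp add: \<phi>_def)
        moreover have "r = d u2 m" using 2 r_def by simp
        then have "(r - 1) mod 3 = 1" using a2 r1 m3b by simp
        ultimately show ?thesis using hh_z by simp
      next
        case 3
        then have "\<phi> = gg" using notL3 by (simp add: \<phi>_def)
        moreover have "r = d u3 m" using 3 r_def by simp
        then have "(r - 1) mod 3 = 2" using a3 r1 m3a by simp
        ultimately show ?thesis using gg_z by simp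
      qed
    qed
    then show ?thesis using S NC C0 xvv by (simp add: laplacian_def degree_def)
  qed
qed

end

lemma wk_edge: "wk E p \<Longrightarrow> Suc j < length p \<Longrightarrow> E (p ! j) (p ! Suc j)"
  using is_walk_wk[of E p] unfolding is_walk_def by blast

lemma m3c: assumes "a + b = (c::nat)" "c mod 3 = 2" "b mod 3 = 1" shows "a mod 3 = 1"
proof -
  have "(a mod 3 + b mod 3) mod 3 = c mod 3" using assms(1) by (simp add: mod_add_eq)
  then have q: "(a mod 3 + 1) mod 3 = 2" using assms by simp
  have "a mod 3 = 0 \<or> a mod 3 = 1 \<or> a mod 3 = 2" by arith
  then show ?thesis
  proof (elim disjE)
    assume "a mod 3 = 0" then show ?thesis using q by simp
  next
    assume "a mod 3 = 2" then show ?thesis using q by simp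
  qed
qed

lemma m3d: assumes "a + b = (c::nat)" "c mod 3 = 0" "b mod 3 = 1" shows "a mod 3 = 2"
proof -
  have "(a mod 3 + b mod 3) mod 3 = c mod 3" using assms(1) by (simp add: mod_add_eq)
  then have q: "(a mod 3 + 1) mod 3 = 0" using assms by simp
  have "a mod 3 = 0 \<or> a mod 3 = 1 \<or> a mod 3 = 2" by arith
  then show ?thesis
  proof (elim disjE)
    assume "a mod 3 = 0" then show ?thesis using q by simp
  next
    assume "a mod 3 = 1" then show ?thesis using q by simp
  qed
qed

context sp
begin

lemma path_dist: assumes w: "wk E p" and ds: "distinct p" and l: "last p = b" and h: "hd p \<in> V"
  shows "i < length p \<Longrightarrow> d (p ! i) b = length p - 1 - i"
proof -
  have pV: "\<And>j. j < length p \<Longrightarrow> p ! j \<in> V" using wkV[OF w h] nth_mem by blast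
  have ne: "p \<noteq> []" using wk_ne[OF w] .
  have bV: "b \<in> V" using pV[of "length p - 1"] l ne by (simp add: last_conv_nth)
  have "\<forall>i. length p - 1 - i = k \<longrightarrow> i < length p \<longrightarrow> d (p ! i) b = k" for k
  proof (induction k rule: less_induct)
    case (less k)
    show ?case
    proof (intro allI impI)
      fix i assume ki: "length p - 1 - i = k" and il: "i < length p"
      show "d (p ! i) b = k"
      proof (cases "k = 0")
        case True
        then have "i = length p - 1" using ki il by simp
        then have "p ! i = b" using l ne by (simp add: last_conv_nth)
        then show ?thesis using True dist_self by simp
      next
        case False
        have e1: "E (p ! i) (p ! Suc i)" using wk_edge[OF w] ki il False by simp
        show ?thesis
        proof (cases "k = 1")
          case True
          then have "Suc i = length p - 1" using ki il by simp
          then have "p ! Suc i = b" using l ne by (simp add: last_conv_nth)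
          then show ?thesis using dist_edge[OF e1] True by simp
        next
          case False2: False
          have k2: "k \<ge> 2" using False False2 by simp
          have IH1: "d (p ! Suc i) b = k - 1" using less.IH[of "k - 1"] ki il k2 by simp
          have IH2: "d (p ! Suc (Suc i)) b = k - 2" using less.IH[of "k - 2"] ki il k2 by simp
          have e2: "E (p ! Suc i) (p ! Suc (Suc i))" using wk_edge[OF w] ki il k2 by simp
          have e1': "E (p ! Suc i) (p ! i)" using sym[OF e1] .
          have "d (p ! i) b = d (p ! Suc i) b + 1 \<or> d (p ! i) b + 1 = d (p ! Suc i) b"
            using nb_cases[OF e1' bV] .
          moreover have "d (p ! i) b + 1 \<noteq> d (p ! Suc i) b"
          proof
            assume a: "d (p ! i) b + 1 = d (p ! Suc i) b"
            have "p ! i = p ! Suc (Suc i)" using down_unique[OF e1' e2 bV] a IH1 IH2 k2 by simp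
            moreover have "Suc (Suc i) < length p" using ki il k2 by simp
            ultimately show False using ds il by (simp add: nth_eq_iff_index_eq)
          qed
          ultimately show ?thesis using IH1 k2 by simp
        qed
      qed
    qed
  qed
  then show "i < length p \<Longrightarrow> d (p ! i) b = length p - 1 - i" by blast
qed

lemma zero_gen: assumes uV: "u \<in> V" and p: "path_between E u m p" and v: "v \<in> set p"
  shows "d v m + d v u = d u m \<and> (\<exists>i. i < length p \<and> v = p ! i)"
proof -
  have w: "wk E p" and h: "hd p = u" and l: "last p = m" and ds: "distinct p"
    using p by (auto simp: path_between_def walk_between_def is_walk_wk)
  have ne: "p \<noteq> []" using wk_ne[OF w] .
  obtain i where i: "i < length p" "v = p ! i" using v by (metis in_set_conv_nth)
  have D1: "d (p ! j) m = length p - 1 - j" if "j < length p" for j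
    using path_dist[OF w ds l] h uV that by simp
  have wr: "wk E (rev p)" using wk_rev[OF sym w] .
  have D2: "d (rev p ! j) u = length p - 1 - j" if "j < length p" for j
    using path_dist[OF wr _ _ _, of u j] ds h l ne mV that by (simp add: last_rev hd_rev)
  have "rev p ! (length p - 1 - i) = p ! i" using i by (simp add: rev_nth)
  then have dvu: "d v u = i" using D2[of "length p - 1 - i"] i by simp
  have "d u m = length p - 1" using D1[of 0] ne h by (simp add: hd_conv_nth)
  then show ?thesis using D1[OF i(1)] i dvu by auto
qed

lemma zero_u2: assumes p: "path_between E u2 m p" and v: "v \<in> set p" and dv: "d v u2 mod 3 = 1"
  shows "xv v = 0"
proof -
  have vV: "v \<in> V" using p v wkV2 uV(2) by (auto simp: path_between_def walk_between_def is_walk_wk)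
  have s: "d v m + d v u2 = d u2 m" using zero_gen[OF uV(2) p v] by blast
  then have "L2 v" unfolding L2_def by simp
  moreover have "d v m mod 3 = 1" using m3c[OF s a2 dv] .
  ultimately show ?thesis using vV hh_z by (simp add: xv_def)
qed

lemma zero_u13: assumes uV': "u \<in> V" and nL: "\<not> L2 u" and au: "d u m mod 3 = 0"
  and p: "path_between E u m p" and v: "v \<in> set p" and dv: "d v u mod 3 = 1"
  shows "xv v = 0"
proof -
  have w: "wk E p" and h: "hd p = u" and l: "last p = m" and ds: "distinct p"
    using p by (auto simp: path_between_def walk_between_def is_walk_wk)
  have ne: "p \<noteq> []" using wk_ne[OF w] .
  have vV: "v \<in> V" using wkV2[OF w] h uV' v by simp
  have pV: "\<And>j. j < length p \<Longrightarrow> p ! j \<in> V" using wkV[OF w] h uV' nth_mem by blast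
  obtain i where i: "i < length p" "v = p ! i" and s: "d v m + d v u = d u m"
    using zero_gen[OF uV' p v] by blast
  have D1: "d (p ! j) m = length p - 1 - j" if "j < length p" for j
    using path_dist[OF w ds l] h uV' that by simp
  have dm: "d v m mod 3 = 2" using m3d[OF s au dv] .
  show ?thesis
  proof (cases "L2 v")
    case False
    then show ?thesis using vV gg_z dm by (simp add: xv_def)
  next
    case True
    have vm: "v \<noteq> m"
    proof
      assume "v = m"
      then have "d m u mod 3 = 1" using dv by simp
      then show False using dsym[OF mV uV'] au by simp
    qed
    have pm: "p ! (length p - 1) = m" using l ne by (simp add: last_conv_nth)
    have "i \<noteq> length p - 1" using i vm pm by auto
    then have il: "i < length p - 1" using i(1) by simp
    have nm: "p ! j \<noteq> m" if "j < length p - 1" for j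
    proof -
      have "p ! j \<noteq> p ! (length p - 1)" using ds that ne by (simp add: nth_eq_iff_index_eq)
      then show ?thesis using pm by simp
    qed
    have allL: "\<forall>k. k \<le> i \<longrightarrow> L2 (p ! (i - k))"
    proof (intro allI)
      fix k show "k \<le> i \<longrightarrow> L2 (p ! (i - k))"
      proof (induction k)
        case 0 then show ?case using True i by simp
      next
        case (Suc k)
        show ?case
        proof
          assume sk: "Suc k \<le> i"
          define j where "j = i - Suc k"
          have jj: "Suc j = i - k" using sk j_def by simp
          have Lj1: "L2 (p ! Suc j)" using Suc sk jj by simp
          have jl: "Suc j < length p" using jj il by simp
          have e: "E (p ! Suc j) (p ! j)" using sym[OF wk_edge[OF w jl]] .
          have dd: "d (p ! j) m = d (p ! Suc j) m + 1" using D1[of j] D1[of "Suc j"] jl il jj by simp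
          have "L2 (p ! j)" using P2[OF pV[OF jl] nm[of "Suc j"] Lj1 e dd] jj il by simp
          then show "L2 (p ! (i - Suc k))" using j_def by simp
        qed
      qed
    qed
    have "L2 (p ! 0)" using spec[OF allL, of i] by simp
    then have "L2 u" using h ne by (simp add: hd_conv_nth)
    then show ?thesis using nL by simp
  qed
qed

end

theorem mainTheorem8:
  fixes V :: "'a set" and E :: "'a \<Rightarrow> 'a \<Rightarrow> bool" and u1 u2 u3 m :: 'a
  assumes "is_tree V E"
    and "distinct [u1, u2, u3]"
    and "{v \<in> V. degree V E v = 1} = {u1, u2, u3}"
    and "m \<in> V" and "degree V E m \<ge> 3"
    and "gdist E u1 m mod 3 = 0"
    and "gdist E u2 m mod 3 = 2"
    and "gdist E u3 m mod 3 = 0"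
  shows "\<exists>x. laplacian_eigenvector V E 1 x \<and>
     (\<forall>u \<in> {u1, u2, u3}. \<forall>p v. path_between E u m p \<and> v \<in> set p \<and> gdist E v u mod 3 = 1
        \<longrightarrow> x v = 0)"
proof -
  interpret S: sp V E u1 u2 u3 m
    using assms by (unfold_locales) auto
  have ev: "laplacian_eigenvector V E 1 S.xv"
    unfolding laplacian_eigenvector_def
  proof (intro conjI)
    show "S.xv \<in> extensional V" by (simp add: extensional_def S.xv_def)
    show "\<exists>v\<in>V. S.xv v \<noteq> 0"
    proof (rule bexI[of _ m])
      show "S.xv m \<noteq> 0" using S.xm by simp
      show "m \<in> V" using assms(4) .
    qed
    show "\<forall>v\<in>V. laplacian V E S.xv v = 1 * S.xv v"
    proof
      fix v assume "v \<in> V"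
      then show "laplacian V E S.xv v = 1 * S.xv v" using S.eig_m S.eig_v by (cases "v = m") auto
    qed
  qed
  have z: "\<forall>u \<in> {u1, u2, u3}. \<forall>p v. path_between E u m p \<and> v \<in> set p \<and> gdist E v u mod 3 = 1
        \<longrightarrow> S.xv v = 0"
  proof (intro ballI allI impI)
    fix u p v assume u: "u \<in> {u1, u2, u3}"
      and H: "path_between E u m p \<and> v \<in> set p \<and> gdist E v u mod 3 = 1"
    consider "u = u1" | "u = u2" | "u = u3" using u by blast
    then show "S.xv v = 0"
    proof cases
      case 1 then show ?thesis using S.zero_u13[OF S.uV(1) S.notL1 assms(6)] H by blast
    next
      case 2 then show ?thesis using S.zero_u2 H by blast
    next
      case 3 then show ?thesis using S.zero_u13[OF S.uV(3) S.notL3 assms(8)] H by blast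
    qed
  qed
  show ?thesis using ev z by blast
qed

end
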